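(* Assume $\lim_{\epsilon\to0}\frac{h_{ex}}{|\ln\epsilon|}=h_0\in[0,\infty)$. Let $(v_0,\vec A_0)\in V\times K_0$ be a minimizer of $\mathcal G_{h_0}$ and define $$\vec A^\epsilon(x)=|\ln\epsilon|\vec A_0(x)+(h_{ex}-h_0|\ln\epsilon|)\vec a(x).$$ Then $$\hat A^{\epsilon,s}:=\sum_{n=0}^{N-1}\frac{\hat A^\epsilon_n}{|\ln\epsilon|}\chi_n\to\hat A_0\quad\text{in }L^2(D;\mathbb R^2)$$ as $(\epsilon,s)\to(0,0)$, where $\hat A^\epsilon_n(\hat x)=(A^{\epsilon,1}(\hat x,ns),A^{\epsilon,2}(\hat x,ns))$ and $\hat A_0=(A_0^1,A_0^2)$.
   Context: Let $\Omega\subset\mathbb R^2$ be a bounded simply connected smooth domain, $L>0$, $D=\Omega\times(0,L)$, $s=L/N$ with $N$ a positive integer; $h_{ex}=h_{ex}(\epsilon)>0$. Points are $x=(\hat x,x_3)$; for $\vec A=(A^1,A^2,A^3)$, $\hat A=(A^1,A^2)$. $\vec a(x)=\frac12(-x_2,x_1,0)$. $\check H^1(\mathbb R^3;\mathbb R^3)$ is the completion of $C_c^\infty(\mathbb R^3;\mathbb R^3)$ under $(\int|\nabla\vec C|^2)^{1/2}$. $E_0:=\{\vec C\in H^1_{loc}(\mathbb R^3;\mathbb R^3):\nabla\times\vec C-h_0\vec e_3\in L^2\}$, $K_0:=\{\vec C\in E_0:\nabla\cdot\vec C=0,\ \vec C-h_0\vec a\in\check H^1\cap L^6(\mathbb R^3;\mathbb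 R^3)\}$. $\operatorname{curl}v=\partial_1v^2-\partial_2v^1$; $V:=\{v\in L^2(D;\mathbb R^2):\operatorname{curl}v\text{ is a finite Radon measure on }D\}$. $\mathcal G_{h_0}(v,\vec A)=\frac12\big[\|v-\hat A\|^2_{L^2(D)}+|\operatorname{curl}v|(D)+\|\nabla\times\vec A-h_0\vec e_3\|^2_{L^2(\mathbb R^3)}\big]$ (with $+\infty$ if $\operatorname{curl}v$ is not a finite measure). The components $A_0^1,A_0^2$ of a minimizer are continuous, so their traces on the planes $x_3=ns$ are defined classically. $\chi_0=\chi_{(0,s)}(x_3)$, $\chi_n=\chi_{[ns,(n+1)s)}(x_3)$ for $1\le n\le N-1$. *)

theory Defs
  imports "HOL-Analysis.Analysis"
begin

definition partial :: "'n::finite \<Rightarrow> (real^'n \<Rightarrow> real) \<Rightarrow> real^'n \<Rightarrow> real" where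
  "partial i f x = deriv (\<lambda>t. f (x + t *\<^sub>R axis i 1)) 0"

fun iter_partial :: "'n::finite list \<Rightarrow> (real^'n \<Rightarrow> real) \<Rightarrow> real^'n \<Rightarrow> real" where
  "iter_partial [] f = f"
| "iter_partial (i # is) f = partial i (iter_partial is f)"

definition smooth_fun :: "(real^'n::finite \<Rightarrow> real) \<Rightarrow> bool" where
  "smooth_fun f \<longleftrightarrow>
     (\<forall>is. continuous_on UNIV (iter_partial is f) \<and>
        (\<forall>i x. (\<lambda>t. iter_partial is f (x + t *\<^sub>R axis i 1)) differentiable (at 0)))"

definition test_fun :: "(real^'n::finite) set \<Rightarrow> (real^'n \<Rightarrow> real) \<Rightarrow> bool" where
  "test_fun U \<phi> \<longleftrightarrow> smooth_fun \<phi> \<and> compact (closure {x. \<phi> x \<noteq> 0})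
      \<and> closure {x. \<phi> x \<noteq> 0} \<subseteq> U"

definition smooth_domain :: "(real^2) set \<Rightarrow> bool" where
  "smooth_domain \<Omega> \<longleftrightarrow> open \<Omega> \<and> bounded \<Omega> \<and>
     (\<exists>\<rho>. smooth_fun \<rho> \<and> \<Omega> = {y. \<rho> y < 0} \<and>
        (\<forall>y. \<rho> y = 0 \<longrightarrow> (\<exists>i. partial i \<rho> y \<noteq> 0)))"

definition Lp_on :: "(real^'n::finite) set \<Rightarrow> real \<Rightarrow> (real^'n \<Rightarrow> real) \<Rightarrow> bool" where
  "Lp_on S p f \<longleftrightarrow> f \<in> borel_measurable (lebesgue_on S) \<and>
     (\<integral>\<^sup>+x\<in>S. ennreal (\<bar>f x\<bar> powr p) \<partial>lebesgue) < \<infinity>"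

definition L2loc :: "(real^'n::finite \<Rightarrow> real) \<Rightarrow> bool" where
  "L2loc f \<longleftrightarrow> (\<forall>K. compact K \<longrightarrow> Lp_on K 2 f)"

definition loc_integrable_on :: "(real^'n::finite) set \<Rightarrow> (real^'n \<Rightarrow> real) \<Rightarrow> bool" where
  "loc_integrable_on U f \<longleftrightarrow> (\<forall>K. compact K \<and> K \<subseteq> U \<longrightarrow> set_integrable lebesgue K f)"

definition weak_partial :: "(real^'n::finite) set \<Rightarrow> 'n \<Rightarrow> (real^'n \<Rightarrow> real) \<Rightarrow> (real^'n \<Rightarrow> real) \<Rightarrow> bool" where
  "weak_partial U i f g \<longleftrightarrow> loc_integrable_on U f \<and> loc_integrable_on U g \<and>
     (\<forall>\<phi>. test_fun U \<phi> \<longrightarrow>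
        (LINT x|lebesgue. f x * partial i \<phi> x) = - (LINT x|lebesgue. g x * \<phi> x))"

text \<open>The (a.e. unique) weak partial derivative on R^n.\<close>
definition wpd :: "'n::finite \<Rightarrow> (real^'n \<Rightarrow> real) \<Rightarrow> real^'n \<Rightarrow> real" where
  "wpd i f = (SOME g. weak_partial UNIV i f g)"

definition proj12 :: "real^3 \<Rightarrow> real^2" where
  "proj12 y = (\<chi> i. if i = 1 then y $ 1 else y $ 2)"

definition mk3 :: "real^2 \<Rightarrow> real \<Rightarrow> real^3" where
  "mk3 p t = (\<chi> i. if i = 1 then p $ 1 else if i = 2 then p $ 2 else t)"

definition cyl :: "(real^2) set \<Rightarrow> real \<Rightarrow> (real^3) set" where
  "cyl \<Omega> L = {x. proj12 x \<in> \<Omega> \<and> 0 < x $ 3 \<and> x $ 3 < L}"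

definition avec :: "real^3 \<Rightarrow> real^3" where
  "avec x = (\<chi> i. if i = 1 then - x $ 2 / 2 else if i = 2 then x $ 1 / 2 else 0)"

definition e3 :: "real^3" where "e3 = axis 3 1"

definition comp :: "(real^3 \<Rightarrow> real^3) \<Rightarrow> 3 \<Rightarrow> real^3 \<Rightarrow> real" where
  "comp A j = (\<lambda>x. A x $ j)"

definition H1loc :: "(real^3 \<Rightarrow> real^3) \<Rightarrow> bool" where
  "H1loc A \<longleftrightarrow> (\<forall>j i. L2loc (comp A j) \<and>
      (\<exists>g. weak_partial UNIV i (comp A j) g \<and> L2loc g))"

definition wcurl :: "(real^3 \<Rightarrow> real^3) \<Rightarrow> real^3 \<Rightarrow> real^3" where
  "wcurl A x = (\<chi> k. if k = 1 then wpd 2 (comp A 3) x - wpd 3 (comp A 2) x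
                 else if k = 2 then wpd 3 (comp A 1) x - wpd 1 (comp A 3) x
                 else wpd 1 (comp A 2) x - wpd 2 (comp A 1) x)"

definition wdiv :: "(real^3 \<Rightarrow> real^3) \<Rightarrow> real^3 \<Rightarrow> real" where
  "wdiv A x = wpd 1 (comp A 1) x + wpd 2 (comp A 2) x + wpd 3 (comp A 3) x"

definition L2norm_sq :: "(real^'n::finite) set \<Rightarrow> (real^'n \<Rightarrow> real^'m::finite) \<Rightarrow> ennreal" where
  "L2norm_sq S f = (\<integral>\<^sup>+x\<in>S. ennreal ((norm (f x))\<^sup>2) \<partial>lebesgue)"

definition L2_vec :: "(real^'n::finite) set \<Rightarrow> (real^'n \<Rightarrow> real^'m::finite) \<Rightarrow> bool" where
  "L2_vec S f \<longleftrightarrow> f \<in> borel_measurable (lebesgue_on S) \<and> L2norm_sq S f < \<infinity>"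

definition cgrad :: "(real^3 \<Rightarrow> real) \<Rightarrow> real^3 \<Rightarrow> real^3" where
  "cgrad \<phi> x = (\<chi> i. partial i \<phi> x)"

definition wgrad :: "(real^3 \<Rightarrow> real) \<Rightarrow> real^3 \<Rightarrow> real^3" where
  "wgrad u x = (\<chi> i. wpd i u x)"

text \<open>Scalar u lies in (check H^1) \<inter> L^6(R^3): u is in L^6, has an L^2 weak gradient, and
  is the limit of C_c^infinity functions both in the Dirichlet seminorm and in L^6
  (i.e. u is the function representing an element of the completion of C_c^infinity
  under the Dirichlet norm).\<close>
definition checkH1_L6 :: "(real^3 \<Rightarrow> real) \<Rightarrow> bool" where
  "checkH1_L6 u \<longleftrightarrow> Lp_on UNIV 6 u \<and>
     (\<forall>i. weak_partial UNIV i u (wpd i u)) \<and> L2_vec UNIV (wgrad u) \<and>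
     (\<exists>\<phi>::nat \<Rightarrow> real^3 \<Rightarrow> real. (\<forall>k. test_fun UNIV (\<phi> k)) \<and>
        (\<lambda>k. L2norm_sq UNIV (\<lambda>x. cgrad (\<phi> k) x - wgrad u x)) \<longlonglongrightarrow> 0 \<and>
        (\<lambda>k. \<integral>\<^sup>+x. ennreal (\<bar>\<phi> k x - u x\<bar> powr 6) \<partial>lebesgue) \<longlonglongrightarrow> 0)"

definition E0 :: "real \<Rightarrow> (real^3 \<Rightarrow> real^3) set" where
  "E0 h0 = {C. H1loc C \<and> L2_vec UNIV (\<lambda>x. wcurl C x - h0 *\<^sub>R e3)}"

definition K0 :: "real \<Rightarrow> (real^3 \<Rightarrow> real^3) set" where
  "K0 h0 = {C. C \<in> E0 h0 \<and> (AE x in lebesgue. wdiv C x = 0) \<and>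
               (\<forall>j. checkH1_L6 (\<lambda>x. C x $ j - h0 * avec x $ j))}"

text \<open>Total variation |curl v|(D) of the distributional 2D curl of v on D (in ereal;
  it is finite iff curl v is a finite Radon measure on D).\<close>
definition curl_TV :: "(real^3) set \<Rightarrow> (real^3 \<Rightarrow> real^2) \<Rightarrow> ereal" where
  "curl_TV D v = (SUP \<phi> \<in> {\<phi>. test_fun D \<phi> \<and> (\<forall>x. \<bar>\<phi> x\<bar> \<le> 1)}.
      ereal (LINT x|lebesgue. v x $ 1 * partial 2 \<phi> x - v x $ 2 * partial 1 \<phi> x))"

definition Vspace :: "(real^3) set \<Rightarrow> (real^3 \<Rightarrow> real^2) set" where
  "Vspace D = {v. L2_vec D v \<and> curl_TV D v < \<infinity>}"

definition Gfun :: "(real^3) set \<Rightarrow> real \<Rightarrow> (real^3 \<Rightarrow> real^2) \<Rightarrow> (real^3 \<Rightarrow> real^3) \<Rightarrow> ereal" where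
  "Gfun D h0 v A = ereal (1/2) * (enn2ereal (L2norm_sq D (\<lambda>x. v x - proj12 (A x)))
        + curl_TV D v + enn2ereal (L2norm_sq UNIV (\<lambda>x. wcurl A x - h0 *\<^sub>R e3)))"

definition chi :: "real \<Rightarrow> nat \<Rightarrow> real \<Rightarrow> real" where
  "chi s n t = (if n = 0 then indicator {0<..<s} t else indicator {real n * s..<real (n+1) * s} t)"

definition Ahat_eps_s :: "real \<Rightarrow> real \<Rightarrow> nat \<Rightarrow> (real^3 \<Rightarrow> real^3) \<Rightarrow> real^3 \<Rightarrow> real^2" where
  "Ahat_eps_s L eps N Aeps x =
     (\<Sum>n<N. (chi (L / real N) n (x $ 3) / \<bar>ln eps\<bar>) *\<^sub>R proj12 (Aeps (mk3 (proj12 x) (real n * (L / real N)))))"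

end

theory Submission
  imports Defs
begin

lemma p12: "proj12 y $ 1 = y $ 1" "proj12 y $ 2 = y $ 2"
  by (simp_all add: proj12_def)
lemma mk3c: "mk3 p t $ 1 = p $ 1" "mk3 p t $ 2 = p $ 2" "mk3 p t $ 3 = t"
  by (simp_all add: mk3_def)

lemma proj12_add: "proj12 (a + b) = proj12 a + proj12 b"
  by (simp add: vec_eq_iff forall_2 p12)
lemma proj12_scale: "proj12 (c *\<^sub>R a) = c *\<^sub>R proj12 a"
  by (simp add: vec_eq_iff forall_2 p12)
lemma proj12_avec: "proj12 (avec (mk3 (proj12 x) t)) = proj12 (avec x)"
  by (simp add: vec_eq_iff forall_2 p12 mk3c avec_def)

lemma norm3: "norm (x::real^3) \<le> \<bar>x$1\<bar> + \<bar>x$2\<bar> + \<bar>x$3\<bar>"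
  using norm_le_l1_cart[of x] by (simp add: sum_3)
lemma norm2: "norm (x::real^2) \<le> \<bar>x$1\<bar> + \<bar>x$2\<bar>"
  using norm_le_l1_cart[of x] by (simp add: sum_2)

lemma norm_avec: "norm (proj12 (avec x)) \<le> norm x"
proof -
  have "norm (proj12 (avec x)) \<le> \<bar>x$2\<bar>/2 + \<bar>x$1\<bar>/2"
    using norm2[of "proj12 (avec x)"] by (simp add: p12 avec_def)
  also have "\<dots> \<le> norm x" using component_le_norm_cart[of x 1] component_le_norm_cart[of x 2] by simp
  finally show ?thesis .
qed

lemma cont_proj12: "continuous_on UNIV proj12"
  unfolding proj12_def by (intro continuous_on_vec_lambda, case_tac "i = 1") (auto intro!: continuous_intros)

lemma cont_pB: assumes "continuous_on UNIV (\<lambda>x. B x $ 1)" "continuous_on UNIV (\<lambda>x. B x $ 2)"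
  shows "continuous_on UNIV (\<lambda>x. proj12 (B x))"
  unfolding proj12_def using assms by (intro continuous_on_vec_lambda, case_tac "i = 1") auto

lemma cyl_open: "open \<Omega> \<Longrightarrow> open (cyl \<Omega> L)"
proof -
  assume o: "open \<Omega>"
  have "cyl \<Omega> L = proj12 -` \<Omega> \<inter> {x. 0 < x$3} \<inter> {x. x $ 3 < L}"
    by (auto simp: cyl_def)
  moreover have "open (proj12 -` \<Omega>)" using o cont_proj12
    by (simp add: open_vimage)
  moreover have "open {x::real^3. 0 < x$3}" "open {x::real^3. x$3 < L}"
    by (auto intro!: open_Collect_less continuous_intros)
  ultimately show ?thesis by auto
qed

lemma floor_props:
  assumes "s > 0" "0 < t"
  shows "real (nat \<lfloor>t/s\<rfloor>) * s \<le> t \<and> t < (real (nat \<lfloor>t/s\<rfloor>) + 1) * s"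
proof -
  have f0: "0 \<le> \<lfloor>t/s\<rfloor>" using assms by simp
  have a: "of_int \<lfloor>t/s\<rfloor> \<le> t/s" and b: "t/s < of_int \<lfloor>t/s\<rfloor> + 1" by linarith+
  have "of_int \<lfloor>t/s\<rfloor> * s \<le> t" using a assms(1) by (simp add: le_divide_eq)
  moreover have "t < (of_int \<lfloor>t/s\<rfloor> + 1) * s" using mult_strict_right_mono[OF b assms(1)] assms(1) by simp
  moreover have "real (nat \<lfloor>t/s\<rfloor>) = of_int \<lfloor>t/s\<rfloor>" using f0 by simp
  ultimately show ?thesis by simp
qed

lemma chi_single:
  assumes "s > 0" "0 < t" "real n0 * s \<le> t" "t < (real n0 + 1) * s"
  shows "chi s n t = (if n = n0 then 1 else 0)"
proof -
  have iff: "(real n * s \<le> t \<and> t < (real n + 1) * s) \<longleftrightarrow> n = n0"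
  proof
    assume h: "real n * s \<le> t \<and> t < (real n + 1) * s"
    have "real n * s < (real n0 + 1) * s" using h assms by linarith
    then have "real n < real n0 + 1" using assms by simp
    moreover have "real n0 * s < (real n + 1) * s" using h assms by linarith
    then have "real n0 < real n + 1" using assms by simp
    ultimately show "n = n0" by linarith
  qed (use assms in auto)
  show ?thesis
  proof (cases "n = 0")
    case True
    then show ?thesis using iff assms by (auto simp: chi_def indicator_def)
  next
    case False
    then show ?thesis using iff by (auto simp: chi_def indicator_def algebra_simps)
  qed
qed

lemma Ahat_point:
  assumes "N \<ge> 1" "0 < eps" "eps < 1" "L > 0" "0 < x$3" "x$3 < L"
  shows "\<exists>t. 0 \<le> t \<and> t \<le> x$3 \<and> x$3 - t < L / real N \<and>
    Ahat_eps_s L eps N (\<lambda>y. \<bar>ln eps\<bar> *\<^sub>R B y + c *\<^sub>R avec y) x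
     = proj12 (B (mk3 (proj12 x) t)) + (c / \<bar>ln eps\<bar>) *\<^sub>R proj12 (avec x)"
proof -
  define s where "s = L / real N"
  have s0: "s > 0" using assms by (simp add: s_def)
  define n0 where "n0 = nat \<lfloor>x$3/s\<rfloor>"
  have fp: "real n0 * s \<le> x$3" "x$3 < (real n0 + 1) * s"
    using floor_props[OF s0 assms(5)] by (simp_all add: n0_def)
  have "real n0 * s < real N * s" using fp assms by (simp add: s_def)
  then have n0N: "n0 < N" using s0 by simp
  have k0: "\<bar>ln eps\<bar> > 0" using assms by simp
  have "Ahat_eps_s L eps N (\<lambda>y. \<bar>ln eps\<bar> *\<^sub>R B y + c *\<^sub>R avec y) x
      = (\<Sum>n<N. if n = n0 then (1 / \<bar>ln eps\<bar>) *\<^sub>R proj12 (\<bar>ln eps\<bar> *\<^sub>R B (mk3 (proj12 x) (real n * s)) + c *\<^sub>R avec (mk3 (proj12 x) (real n * s))) else 0)"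
    unfolding Ahat_eps_s_def s_def[symmetric]
    by (rule sum.cong) (auto simp: chi_single[OF s0 assms(5) fp])
  also have "\<dots> = (1 / \<bar>ln eps\<bar>) *\<^sub>R proj12 (\<bar>ln eps\<bar> *\<^sub>R B (mk3 (proj12 x) (real n0 * s)) + c *\<^sub>R avec (mk3 (proj12 x) (real n0 * s)))"
    using n0N by (simp add: sum.delta')
  also have "\<dots> = proj12 (B (mk3 (proj12 x) (real n0 * s))) + (c / \<bar>ln eps\<bar>) *\<^sub>R proj12 (avec x)"
    using k0 by (simp add: proj12_add proj12_scale proj12_avec scaleR_add_right)
  finally have eq: "Ahat_eps_s L eps N (\<lambda>y. \<bar>ln eps\<bar> *\<^sub>R B y + c *\<^sub>R avec y) x
     = proj12 (B (mk3 (proj12 x) (real n0 * s))) + (c / \<bar>ln eps\<bar>) *\<^sub>R proj12 (avec x)" .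
  have "0 \<le> real n0 * s" using s0 by simp
  moreover have "x$3 - real n0 * s < L / real N" using fp(2) unfolding s_def[symmetric] by (simp add: algebra_simps)
  ultimately show ?thesis using eq fp(1) by blast
qed

theorem theorem5p1:
  fixes \<Omega> :: "(real^2) set" and L h0 :: real and hex :: "real \<Rightarrow> real"
    and v0 :: "real^3 \<Rightarrow> real^2" and A0 :: "real^3 \<Rightarrow> real^3"
  assumes "smooth_domain \<Omega>" and "simply_connected \<Omega>" and "L > 0"
    and "\<forall>eps>0. hex eps > 0"
    and "h0 \<ge> 0"
    and "((\<lambda>eps. hex eps / \<bar>ln eps\<bar>) \<longlongrightarrow> h0) (at_right 0)"
    and "v0 \<in> Vspace (cyl \<Omega> L)" and "A0 \<in> K0 h0"
    and "\<forall>v \<in> Vspace (cyl \<Omega> L). \<forall>A \<in> K0 h0.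
           Gfun (cyl \<Omega> L) h0 v0 A0 \<le> Gfun (cyl \<Omega> L) h0 v A"
  shows "\<forall>B :: real^3 \<Rightarrow> real^3.
           (AE x in lebesgue. B x = A0 x) \<and> continuous_on UNIV (\<lambda>x. B x $ 1)
             \<and> continuous_on UNIV (\<lambda>x. B x $ 2) \<longrightarrow>
           ((\<lambda>(eps, N). L2norm_sq (cyl \<Omega> L)
               (\<lambda>x. Ahat_eps_s L eps N
                      (\<lambda>y. \<bar>ln eps\<bar> *\<^sub>R B y + (hex eps - h0 * \<bar>ln eps\<bar>) *\<^sub>R avec y) x
                    - proj12 (A0 x)))
            \<longlongrightarrow> 0) (at_right 0 \<times>\<^sub>F sequentially)"
proof (intro allI impI)
  fix B :: "real^3 \<Rightarrow> real^3"
  assume hB: "(AE x in lebesgue. B x = A0 x) \<and> continuous_on UNIV (\<lambda>x. B x $ 1)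
             \<and> continuous_on UNIV (\<lambda>x. B x $ 2)"
  define D where "D = cyl \<Omega> L"
  have oO: "open \<Omega>" and bO: "bounded \<Omega>" using assms(1) by (auto simp: smooth_domain_def)
  obtain M where M0: "M > 0" and M: "\<And>p. p \<in> \<Omega> \<Longrightarrow> norm p \<le> M"
    using bO bounded_pos by metis
  define R where "R = 2 * M + L"
  have R0: "R > 0" using M0 assms(3) by (simp add: R_def)
  have oD: "open D" using cyl_open[OF oO] by (simp add: D_def)
  have Dsets: "D \<in> sets lebesgue" using oD by auto
  have bD: "bounded D"
  proof -
    have "\<forall>x\<in>D. norm x \<le> R"
    proof
      fix x assume "x \<in> D"
      then have h: "proj12 x \<in> \<Omega>" "0 < x$3" "x$3 < L" by (auto simp: D_def cyl_def)
      have "\<bar>x$1\<bar> \<le> M" "\<bar>x$2\<bar> \<le> M"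
        using component_le_norm_cart[of "proj12 x" 1] component_le_norm_cart[of "proj12 x" 2] M[OF h(1)]
        by (simp_all add: p12)
      then show "norm x \<le> R" using norm3[of x] h by (simp add: R_def)
    qed
    then show ?thesis by (auto simp: bounded_iff)
  qed
  have muf: "emeasure lebesgue D < \<infinity>" using oD emeasure_bounded_finite[OF bD] by simp
  define mu where "mu = enn2real (emeasure lebesgue D)"
  have mu: "emeasure lebesgue D = ennreal mu" "mu \<ge> 0"
    using muf by (auto simp: mu_def ennreal_enn2real_if)
  define pB where "pB = (\<lambda>x. proj12 (B x))"
  have ucont: "uniformly_continuous_on (cball 0 R) pB"
    using cont_pB[of B] hB unfolding pB_def
    by (intro compact_uniformly_continuous) (auto intro: continuous_on_subset)
  have inK: "x \<in> cball 0 R" "mk3 (proj12 x) t \<in> cball 0 R"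
    if "x \<in> D" "0 \<le> t" "t \<le> x$3" for x t
  proof -
    have h: "proj12 x \<in> \<Omega>" "0 < x$3" "x$3 < L" using that by (auto simp: D_def cyl_def)
    have "\<bar>x$1\<bar> \<le> M" "\<bar>x$2\<bar> \<le> M"
      using component_le_norm_cart[of "proj12 x" 1] component_le_norm_cart[of "proj12 x" 2] M[OF h(1)]
      by (simp_all add: p12)
    then show "x \<in> cball 0 R" "mk3 (proj12 x) t \<in> cball 0 R"
      using norm3[of x] norm3[of "mk3 (proj12 x) t"] h that by (simp_all add: R_def mk3c p12)
  qed
  show "((\<lambda>(eps, N). L2norm_sq (cyl \<Omega> L)
               (\<lambda>x. Ahat_eps_s L eps N
                      (\<lambda>y. \<bar>ln eps\<bar> *\<^sub>R B y + (hex eps - h0 * \<bar>ln eps\<bar>) *\<^sub>R avec y) x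
                    - proj12 (A0 x)))
            \<longlongrightarrow> 0) (at_right 0 \<times>\<^sub>F sequentially)"
  proof (rule order_tendstoI, simp)
    fix a :: ennreal assume a0: "0 < a"
    obtain b where b: "0 < b" "b < a" using dense[OF a0] by blast
    have btop: "b < top" using b(2) top.not_eq_extremum by fastforce
    define r where "r = enn2real b"
    have r: "ennreal r = b" "r > 0" using b btop by (auto simp: r_def ennreal_enn2real_if enn2real_positive_iff top.not_eq_extremum)
    define \<eta> where "\<eta> = sqrt (r / (mu + 1)) / 2"
    have eta0: "\<eta> > 0" using r mu by (simp add: \<eta>_def)
    have eta2: "(2*\<eta>)^2 = r / (mu + 1)" using r mu by (simp add: \<eta>_def)
    have etamu: "(2*\<eta>)^2 * mu < r"
    proof -
      have "r / (mu + 1) * mu < r / (mu+1) * (mu + 1)" using r mu by (intro mult_strict_left_mono) auto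
      then show ?thesis using eta2 mu by simp
    qed
    obtain \<delta> where d0: "\<delta> > 0" and dcont: "\<And>x y. x \<in> cball 0 R \<Longrightarrow> y \<in> cball 0 R \<Longrightarrow> dist y x < \<delta> \<Longrightarrow> dist (pB y) (pB x) < \<eta>"
      using ucont eta0 unfolding uniformly_continuous_on_def by metis
    have ev1: "eventually (\<lambda>eps. 0 < eps \<and> eps < 1 \<and> dist (hex eps / \<bar>ln eps\<bar>) h0 < \<eta> / R) (at_right 0)"
    proof -
      have "eventually (\<lambda>eps::real. 0<eps \<and> eps<1) (at_right 0)"
        by (auto simp: eventually_at_right_field intro!: exI[of _ 1])
      moreover have "eventually (\<lambda>eps. dist (hex eps / \<bar>ln eps\<bar>) h0 < \<eta> / R) (at_right 0)"
        using tendstoD[OF assms(6)] eta0 R0 by simp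
      ultimately show ?thesis by eventually_elim auto
    qed
    define N0 where "N0 = nat \<lceil>L / \<delta>\<rceil> + 1"
    have ev2: "eventually (\<lambda>N. N \<ge> 1 \<and> L / real N < \<delta>) sequentially"
    proof (rule eventually_sequentiallyI[of N0])
      fix N assume "N0 \<le> N"
      then have "real N \<ge> real (nat \<lceil>L / \<delta>\<rceil>) + 1" by (simp add: N0_def)
      moreover have "real (nat \<lceil>L / \<delta>\<rceil>) \<ge> L / \<delta>" by linarith
      ultimately have "real N > L / \<delta>" by linarith
      then have "L < real N * \<delta>" using d0 by (simp add: divide_less_eq)
      moreover have "N \<ge> 1" using \<open>N0 \<le> N\<close> by (simp add: N0_def)
      ultimately show "N \<ge> 1 \<and> L / real N < \<delta>" by (simp add: divide_less_eq mult.commute)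
    qed
    have key: "(case (eps, N) of (eps, N) \<Rightarrow> L2norm_sq (cyl \<Omega> L)
               (\<lambda>x. Ahat_eps_s L eps N
                      (\<lambda>y. \<bar>ln eps\<bar> *\<^sub>R B y + (hex eps - h0 * \<bar>ln eps\<bar>) *\<^sub>R avec y) x
                    - proj12 (A0 x))) < a"
      if e: "0 < eps \<and> eps < 1 \<and> dist (hex eps / \<bar>ln eps\<bar>) h0 < \<eta> / R"
        and n: "N \<ge> 1 \<and> L / real N < \<delta>" for eps N
    proof -
      have k0: "\<bar>ln eps\<bar> > 0" using e by simp
      define c where "c = hex eps - h0 * \<bar>ln eps\<bar>"
      have cc: "c / \<bar>ln eps\<bar> = hex eps / \<bar>ln eps\<bar> - h0" using k0 by (simp add: c_def field_simps)
      have "dist (hex eps / \<bar>ln eps\<bar>) h0 < \<eta> / R" using e by blast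
      then have "\<bar>hex eps / \<bar>ln eps\<bar> - h0\<bar> < \<eta> / R" by (simp only: dist_real_def)
      then have "\<bar>hex eps / \<bar>ln eps\<bar> - h0\<bar> * R < \<eta>" using R0 by (simp only: pos_less_divide_eq)
      then have cR: "\<bar>c / \<bar>ln eps\<bar>\<bar> * R \<le> \<eta>" unfolding cc by (rule less_imp_le)
      let ?G = "\<lambda>x. Ahat_eps_s L eps N (\<lambda>y. \<bar>ln eps\<bar> *\<^sub>R B y + c *\<^sub>R avec y) x - proj12 (A0 x)"
      have pw: "AE x in lebesgue. ennreal ((norm (?G x))\<^sup>2) * indicator D x \<le> ennreal ((2*\<eta>)^2) * indicator D x"
        using conjunct1[OF hB]
      proof (eventually_elim)
        case (elim x)
        show ?case
        proof (cases "x \<in> D")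
          case False then show ?thesis by simp
        next
          case True
          then have h: "0 < x$3" "x$3 < L" by (auto simp: D_def cyl_def)
          obtain t where t: "0 \<le> t" "t \<le> x$3" "x$3 - t < L / real N"
            and eq: "Ahat_eps_s L eps N (\<lambda>y. \<bar>ln eps\<bar> *\<^sub>R B y + c *\<^sub>R avec y) x
               = proj12 (B (mk3 (proj12 x) t)) + (c / \<bar>ln eps\<bar>) *\<^sub>R proj12 (avec x)"
            using Ahat_point[of N eps L x B c] n e h assms(3) by blast
          have dyx: "dist (mk3 (proj12 x) t) x < \<delta>"
          proof -
            have "dist (mk3 (proj12 x) t) x \<le> \<bar>x$3 - t\<bar>"
              using norm3[of "mk3 (proj12 x) t - x"] by (simp add: dist_norm mk3c p12)
            then show ?thesis using t n by linarith
          qed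
          have d1: "norm (pB (mk3 (proj12 x) t) - pB x) < \<eta>"
            using dcont[OF inK(1)[OF True t(1,2)] inK(2)[OF True t(1,2)] dyx] by (simp add: dist_norm)
          have nx: "norm x \<le> R" using inK(1)[OF True t(1,2)] by simp
          have d2: "norm ((c / \<bar>ln eps\<bar>) *\<^sub>R proj12 (avec x)) \<le> \<eta>"
          proof -
            have "norm ((c / \<bar>ln eps\<bar>) *\<^sub>R proj12 (avec x)) = \<bar>c / \<bar>ln eps\<bar>\<bar> * norm (proj12 (avec x))" by simp
            also have "\<dots> \<le> \<bar>c / \<bar>ln eps\<bar>\<bar> * R"
              using norm_avec[of x] nx by (intro mult_left_mono) auto
            finally show ?thesis using cR by linarith
          qed
          have geq: "?G x = (pB (mk3 (proj12 x) t) - pB x) + (c / \<bar>ln eps\<bar>) *\<^sub>R proj12 (avec x)"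
            using eq elim by (simp add: pB_def)
          have "norm (?G x) \<le> 2 * \<eta>" unfolding geq using d1 d2 norm_triangle_ineq[of "pB (mk3 (proj12 x) t) - pB x" "(c / \<bar>ln eps\<bar>) *\<^sub>R proj12 (avec x)"]
            by linarith
          then have "(norm (?G x))\<^sup>2 \<le> (2*\<eta>)^2" by (intro power_mono) auto
          then show ?thesis using True by simp
        qed
      qed
      have "L2norm_sq (cyl \<Omega> L) ?G = (\<integral>\<^sup>+x. ennreal ((norm (?G x))\<^sup>2) * indicator D x \<partial>lebesgue)"
        by (simp add: L2norm_sq_def D_def)
      also have "\<dots> \<le> (\<integral>\<^sup>+x. ennreal ((2*\<eta>)^2) * indicator D x \<partial>lebesgue)"
        by (rule nn_integral_mono_AE[OF pw])
      also have "\<dots> = ennreal ((2*\<eta>)^2) * emeasure lebesgue D"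
        by (rule nn_integral_cmult_indicator[OF Dsets])
      also have "\<dots> = ennreal ((2*\<eta>)^2 * mu)" using mu by (simp add: ennreal_mult)
      also have "\<dots> < ennreal r" using etamu r mu(2) by (subst ennreal_less_iff) auto
      finally show "(case (eps, N) of (eps, N) \<Rightarrow> L2norm_sq (cyl \<Omega> L)
               (\<lambda>x. Ahat_eps_s L eps N
                      (\<lambda>y. \<bar>ln eps\<bar> *\<^sub>R B y + (hex eps - h0 * \<bar>ln eps\<bar>) *\<^sub>R avec y) x
                    - proj12 (A0 x))) < a" using r b by (simp add: c_def)
    qed
    show "eventually (\<lambda>x. (case x of (eps, N) \<Rightarrow> L2norm_sq (cyl \<Omega> L)
               (\<lambda>x. Ahat_eps_s L eps N
                      (\<lambda>y. \<bar>ln eps\<bar> *\<^sub>R B y + (hex eps - h0 * \<bar>ln eps\<bar>) *\<^sub>R avec y) x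
                    - proj12 (A0 x))) < a) (at_right 0 \<times>\<^sub>F sequentially)"
      unfolding eventually_prod_filter
      by (rule exI[of _ "\<lambda>eps. 0 < eps \<and> eps < 1 \<and> dist (hex eps / \<bar>ln eps\<bar>) h0 < \<eta> / R"],
          rule exI[of _ "\<lambda>N. N \<ge> 1 \<and> L / real N < \<delta>"]) (use ev1 ev2 key in blast)
  qed
qed

end
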